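(* Let $n\ge1$ and $\vec v=(v_1,\dots,v_n)\in\mathbb N_b^n$. Let $k$ be the largest index with $v_k=1$, and put $\vec v_l=(v_1,\dots,v_{k-1})$ and $\vec v_r'=(v_{k+1}-k,\dots,v_n-k)$. Then $\vec v\in\hat N^n$ if and only if $\vec v_l\in\hat N^{k-1}$ and $\vec v_r'\in\hat N^{n-k}$ (here $\hat N^0$ consists only of the empty vector, and a vector with a non-positive coordinate is not in any $\hat N^j$).
   Context: $\mathbb N_b^n=\{(v_1,\dots,v_n)\in\mathbb N^n:\ 1\le v_i\le i\}$. $Y_n$ is the set of planar rooted binary trees with $n$ internal vertices up to isotopy. A complete expression in $x_1,\dots,x_{n+1}$ is a full binary parenthesization of $x_1\cdots x_{n+1}$ (every product of two factors, including the outermost, in parentheses); trees correspond bijectively to complete expressions via $|\mapsto x_1$, $\tau_1\vee\tau_2\mapsto(E_1E_2)$ with consecutive relabelling, where $\tau_1\vee\tau_2$ is the tree with a new root, left subtree $\tau_1$, right subtree $\tau_2$. The name of $\tau\in Y_n$ is the vector $\vec v\in\mathbb N^n$ with $v_i=i$ if at least one left parenthesis stands immediately left of $x_i$ in the complete expression; otherwise the rightmost of the right parentheses immediately following $x_i$ matches a left parenthesis in the run immediately preceding some $x_j$, and $v_i=j$. $\hat N^n$ is the set of names of trees of $Y_n$ ($n\ge1$), and $\hat N^0=\{()\}$ is the name of the trivial tree $|$. *)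

theory Defs
  imports Main
begin

datatype tree = Leaf | Node tree tree

fun internal :: "tree \<Rightarrow> nat" where
  "internal Leaf = 0"
| "internal (Node a b) = Suc (internal a + internal b)"

datatype tok = LP | RP | X

text \<open>The complete expression of a tree (variables are implicitly labelled
  x_1, x_2, ... from left to right).\<close>
fun expr :: "tree \<Rightarrow> tok list" where
  "expr Leaf = [X]"
| "expr (Node a b) = [LP] @ expr a @ expr b @ [RP]"

text \<open>Position (0-based in the token list) of the variable x_i, i >= 1.\<close>
definition xpos :: "tok list \<Rightarrow> nat \<Rightarrow> nat" where
  "xpos e i = [p. p \<leftarrow> [0..<length e], e ! p = X] ! (i - 1)"

definition cnt :: "tok \<Rightarrow> tok list \<Rightarrow> nat" where
  "cnt c xs = length (filter (\<lambda>y. y = c) xs)"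

definition matches :: "tok list \<Rightarrow> nat \<Rightarrow> nat \<Rightarrow> bool" where
  "matches e m q \<longleftrightarrow> m < q \<and> q < length e \<and> e ! m = LP \<and> e ! q = RP \<and>
     (let s = drop m (take (Suc q) e) in
        cnt LP s = cnt RP s \<and>
        (\<forall>l. 0 < l \<and> l < length s \<longrightarrow> cnt RP (take l s) < cnt LP (take l s)))"

definition name_coord :: "tree \<Rightarrow> nat \<Rightarrow> int" where
  "name_coord t i =
     (let e = expr t; p = xpos e i in
      if 0 < p \<and> e ! (p - 1) = LP then int i
      else
        (let q = p + length (takeWhile (\<lambda>y. y = RP) (drop (Suc p) e));
             m = (THE m. matches e m q)
         in int (card {r. r < m \<and> e ! r = X}) + 1))"

definition name :: "tree \<Rightarrow> int list" where
  "name t = map (name_coord t) [1..<Suc (internal t)]"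

definition Nhat :: "nat \<Rightarrow> int list set" where
  "Nhat n = {name t | t. internal t = n}"

text \<open>Bounded vectors N_b^n, as integer lists (0-based index i holds v_(i+1)).\<close>
definition Nb :: "nat \<Rightarrow> int list set" where
  "Nb n = {v. length v = n \<and> (\<forall>i<n. 1 \<le> v ! i \<and> v ! i \<le> int (Suc i))}"

end

theory Submission
  imports Defs
begin

lemma concat_filter: "concat (map (\<lambda>x. if P x then [x] else []) xs) = filter P xs"
  by (induction xs) auto

definition Xs :: "tok list \<Rightarrow> nat list" where
  "Xs e = filter (\<lambda>p. e!p = X) [0..<length e]"

lemma xpos_Xs: "xpos e i = Xs e ! (i - 1)"
  unfolding xpos_def Xs_def by (simp add: concat_filter)

lemma Xs_append: "Xs (xs @ ys) = Xs xs @ map (\<lambda>p. p + length xs) (Xs ys)"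
proof -
  have u: "[0..<length (xs@ys)] = [0..<length xs] @ map (\<lambda>p. p + length xs) [0..<length ys]"
  proof -
    have "[0..<length xs + length ys] = [0..<length xs] @ [length xs..<length xs + length ys]"
      by (rule upt_add_eq_append) simp
    moreover have "map (\<lambda>p. p + length xs) [0..<length ys] = [length xs..<length ys + length xs]"
      by (rule map_add_upt)
    ultimately show ?thesis by (simp add: ac_simps)
  qed
  have 1: "filter (\<lambda>p. (xs@ys)!p = X) [0..<length xs] = filter (\<lambda>p. xs!p = X) [0..<length xs]"
    by (rule filter_cong) (auto simp: nth_append)
  have 2: "filter (\<lambda>p. (xs@ys)!p = X) (map (\<lambda>p. p + length xs) [0..<length ys])
      = map (\<lambda>p. p + length xs) (filter (\<lambda>p. ys!p = X) [0..<length ys])"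
    by (simp add: filter_map comp_def nth_append)
  show ?thesis unfolding Xs_def u by (simp add: 1 2)
qed

lemma Xs_Nil[simp]: "Xs [] = []" by (simp add: Xs_def)
lemma Xs_single[simp]: "Xs [y] = (if y = X then [0] else [])" by (simp add: Xs_def)

lemma cnt_Nil[simp]: "cnt c [] = 0" by (simp add: cnt_def)
lemma cnt_Cons[simp]: "cnt c (y # ys) = (if y = c then 1 else 0) + cnt c ys" by (simp add: cnt_def)
lemma cnt_append[simp]: "cnt c (xs @ ys) = cnt c xs + cnt c ys" by (simp add: cnt_def)
lemma cnt_rep[simp]: "cnt c (replicate r y) = (if y = c then r else 0)" by (simp add: cnt_def)

lemma length_Xs: "length (Xs e) = cnt X e"
  by (induction e rule: rev_induct) (auto simp: Xs_append)

lemma Xs_nth: "i < length (Xs e) \<Longrightarrow> Xs e ! i < length e \<and> e ! (Xs e ! i) = X"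
proof -
  assume "i < length (Xs e)"
  then have "Xs e ! i \<in> set (Xs e)" by simp
  then show ?thesis unfolding Xs_def by simp
qed

lemma Xs_sorted: "i < j \<Longrightarrow> j < length (Xs e) \<Longrightarrow> Xs e ! i < Xs e ! j"
proof -
  assume a: "i < j" "j < length (Xs e)"
  have "sorted_wrt (<) (Xs e)" unfolding Xs_def
    by (rule sorted_wrt_filter) (simp add: sorted_wrt_upt)
  then show ?thesis using a sorted_wrt_nth_less by blast
qed

lemma cnt_expr: "cnt X (expr t) = Suc (internal t)"
  by (induction t) auto

lemma Xs_expr_len: "length (Xs (expr t)) = Suc (internal t)"
  by (simp add: length_Xs cnt_expr)

definition wb :: "tok list \<Rightarrow> bool" where
  "wb xs \<longleftrightarrow> cnt LP xs = cnt RP xs \<and> (\<forall>l. cnt RP (take l xs) \<le> cnt LP (take l xs))"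

lemma wb_append: "wb xs \<Longrightarrow> wb ys \<Longrightarrow> wb (xs @ ys)"
  unfolding wb_def
proof (intro conjI allI)
  assume a: "cnt LP xs = cnt RP xs \<and> (\<forall>l. cnt RP (take l xs) \<le> cnt LP (take l xs))"
     and b: "cnt LP ys = cnt RP ys \<and> (\<forall>l. cnt RP (take l ys) \<le> cnt LP (take l ys))"
  show "cnt LP (xs @ ys) = cnt RP (xs @ ys)" using a b by simp
  fix l
  show "cnt RP (take l (xs @ ys)) \<le> cnt LP (take l (xs @ ys))"
  proof (cases "l \<le> length xs")
    case True then show ?thesis using a by simp
  next
    case False
    have h: "cnt RP (take (l - length xs) ys) \<le> cnt LP (take (l - length xs) ys)" using b by blast
    show ?thesis using False a h by simp
  qed
qed

lemma wb_wrap: "wb w \<Longrightarrow> wb (LP # w @ [RP])"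
  unfolding wb_def
proof (intro conjI allI)
  assume a: "cnt LP w = cnt RP w \<and> (\<forall>l. cnt RP (take l w) \<le> cnt LP (take l w))"
  show "cnt LP (LP # w @ [RP]) = cnt RP (LP # w @ [RP])" using a by simp
  fix l
  show "cnt RP (take l (LP # w @ [RP])) \<le> cnt LP (take l (LP # w @ [RP]))"
  proof (cases l)
    case 0 then show ?thesis by simp
  next
    case (Suc l')
    have h: "cnt RP (take l' w) \<le> cnt LP (take l' w)" using a by blast
    show ?thesis
    proof (cases "l' \<le> length w")
      case True then show ?thesis using h Suc by simp
    next
      case False then show ?thesis using a Suc by simp
    qed
  qed
qed

lemma wb_expr: "wb (expr t)"
proof (induction t)
  case Leaf then show ?case by (simp add: wb_def take_Cons')
next
  case (Node a b) then show ?case using wb_wrap[OF wb_append[OF Node.IH]] by simp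
qed

lemma root_match: "matches (expr (Node a b)) 0 (length (expr (Node a b)) - 1)"
proof -
  define w where "w = expr a @ expr b"
  have e: "expr (Node a b) = LP # w @ [RP]" by (simp add: w_def)
  have wbw: "wb w" unfolding w_def by (rule wb_append; rule wb_expr)
  have lt: "cnt RP (take l (LP # w @ [RP])) < cnt LP (take l (LP # w @ [RP]))"
    if l0: "0 < l" and l1: "l < length (LP # w @ [RP])" for l
  proof -
    obtain l' where l: "l = Suc l'" using l0 by (cases l) auto
    have "l' \<le> length w" using l1 l by simp
    then show ?thesis using wbw l unfolding wb_def by (simp add: le_imp_less_Suc)
  qed
  have s: "drop 0 (take (Suc (length (LP # w @ [RP]) - 1)) (LP # w @ [RP])) = LP # w @ [RP]" by simp
  have c: "cnt LP (LP # w @ [RP]) = cnt RP (LP # w @ [RP])" using wbw by (simp add: wb_def)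
  show ?thesis unfolding e matches_def Let_def s using c lt by simp
qed


lemma seg_shift:
  assumes "q < length ys"
  shows "drop (m + length pre) (take (Suc (q + length pre)) (pre @ ys @ post)) = drop m (take (Suc q) ys)"
proof -
  have "take (Suc (q + length pre)) (pre @ ys @ post) = pre @ take (Suc q) (ys @ post)"
    by (simp add: take_append)
  also have "take (Suc q) (ys @ post) = take (Suc q) ys"
  proof -
    have "Suc q - length ys = 0" using assms by simp
    then show ?thesis by (simp add: take_append)
  qed
  finally have "take (Suc (q + length pre)) (pre @ ys @ post) = pre @ take (Suc q) ys" .
  moreover have "drop (m + length pre) (pre @ Z) = drop m Z" for Z by simp
  ultimately show ?thesis by presburger
qed

lemma matches_shift:
  assumes "matches ys m q"
  shows "matches (pre @ ys @ post) (m + length pre) (q + length pre)"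
proof -
  have q: "q < length ys" and mq: "m < q" using assms unfolding matches_def by auto
  have n1: "(pre @ ys @ post) ! (m + length pre) = ys ! m" using q mq by (simp add: nth_append)
  have n2: "(pre @ ys @ post) ! (q + length pre) = ys ! q" using q by (simp add: nth_append)
  show ?thesis using assms q unfolding matches_def Let_def seg_shift[OF q] n1 n2 by simp
qed

lemma matches_unique:
  assumes a: "matches e m q" and b: "matches e m' q"
  shows "m = m'"
proof (rule ccontr)
  assume ne: "m \<noteq> m'"
  have key: False if a: "matches e m q" and b: "matches e m' q" and lt: "m < m'" for m m'
  proof -
    define s where "s = drop m (take (Suc q) e)"
    define d where "d = m' - m"
    have q: "q < length e" and m'q: "m' < q" using b unfolding matches_def by auto
    have ls: "length s = Suc q - m" using q unfolding s_def by simp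
    have s': "drop m' (take (Suc q) e) = drop d s" unfolding s_def d_def using lt by (simp add: add.commute)
    have sp: "s = take d s @ drop d s" by simp
    have c1: "cnt LP s = cnt RP s" using a unfolding matches_def Let_def s_def by auto
    have c2: "cnt LP (drop d s) = cnt RP (drop d s)" using b unfolding matches_def Let_def s' by auto
    have c3: "cnt LP (take d s) = cnt RP (take d s)" using c1 c2 sp
      by (metis add_right_cancel cnt_append)
    have "0 < d" "d < length s" using lt m'q ls unfolding d_def by auto
    then have "cnt RP (take d s) < cnt LP (take d s)" using a unfolding matches_def Let_def s_def by auto
    then show False using c3 by simp
  qed
  show False using ne key[OF a b] key[OF b a] by linarith
qed

lemma the_match: "matches e m q \<Longrightarrow> (THE m. matches e m q) = m"
  using matches_unique by blast

lemma expr_hd: "expr t ! 0 = LP \<or> t = Leaf"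
  by (cases t) auto

lemma expr_ne: "expr t \<noteq> []"
  by (cases t) auto

lemma match_exists: "q < length (expr t) \<Longrightarrow> expr t ! q = RP \<Longrightarrow> \<exists>m. matches (expr t) m q"
proof (induction t arbitrary: q)
  case Leaf then show ?case by simp
next
  case (Node a b)
  define ea where "ea = expr a"
  define eb where "eb = expr b"
  have e1: "expr (Node a b) = [LP] @ ea @ (eb @ [RP])" by (simp add: ea_def eb_def)
  have e2: "expr (Node a b) = (LP # ea) @ eb @ [RP]" by (simp add: ea_def eb_def)
  consider "q = 0" | "0 < q \<and> q \<le> length ea" | "length ea < q \<and> q \<le> length ea + length eb"
    | "q = length ea + length eb + 1"
  proof -
    have L: "length (expr (Node a b)) = length ea + length eb + 2" by (simp add: ea_def eb_def)
    have "q = 0 \<or> (0 < q \<and> q \<le> length ea) \<or> (length ea < q \<and> q \<le> length ea + length eb)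
       \<or> q = length ea + length eb + 1" using Node.prems(1) L by linarith
    then show ?thesis using that by blast
  qed
  then show ?case
  proof cases
    case 1 then show ?thesis using Node.prems by simp
  next
    case 2
    have p: "([LP] @ ea @ (eb @ [RP])) ! q = RP" using Node.prems(2) unfolding e1 .
    then have "q - 1 < length ea" "ea ! (q - 1) = RP" using 2
      by (auto simp: nth_append nth_Cons split: nat.splits)
    then obtain m where "matches ea m (q - 1)" using Node.IH(1) ea_def by blast
    from matches_shift[OF this, of "[LP]" "eb @ [RP]"] 2 show ?thesis unfolding e1 by auto
  next
    case 3
    have p: "((LP # ea) @ eb @ [RP]) ! q = RP" using Node.prems(2) unfolding e2 .
    have ar: "q - Suc 0 - length ea = q - Suc (length ea)" "\<not> q - Suc 0 < length ea"
      "q - Suc (length ea) < length eb" using 3 by auto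
    then have "q - Suc (length ea) < length eb" "eb ! (q - Suc (length ea)) = RP" using p 3
      by (auto simp: nth_append)
    then obtain m where "matches eb m (q - Suc (length ea))" using Node.IH(2) eb_def by blast
    from matches_shift[OF this, of "LP # ea" "[RP]"] 3 show ?thesis unfolding e2 by auto
  next
    case 4
    then show ?thesis using root_match[of a b] by (auto simp: ea_def eb_def)
  qed
qed


lemma nthA: "j < length ea \<Longrightarrow> (LP # ea @ eb @ [RP]) ! Suc j = ea ! j"
  by (simp add: nth_append)
lemma nthB: "j < length eb \<Longrightarrow> (LP # ea @ eb @ [RP]) ! Suc (length ea + j) = eb ! j"
  by (simp add: nth_append)
lemma nthC: "(LP # ea @ eb @ [RP]) ! Suc (length ea + length eb) = RP"
  by (simp add: nth_append)

lemma rp_after: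
  "p < length (expr t) \<Longrightarrow> expr t ! p = X \<Longrightarrow> 0 < p \<Longrightarrow> expr t ! (p - 1) \<noteq> LP
   \<Longrightarrow> Suc p < length (expr t) \<and> expr t ! Suc p = RP"
proof (induction t arbitrary: p)
  case Leaf then show ?case by simp
next
  case (Node a b)
  define ea where "ea = expr a"
  define eb where "eb = expr b"
  have e: "expr (Node a b) = LP # ea @ eb @ [RP]" by (simp add: ea_def eb_def)
  obtain p' where p': "p = Suc p'" using Node.prems(3) by (cases p) auto
  have pl: "p' < length ea + length eb + 1" using Node.prems(1) unfolding p' e by simp
  have pX: "(LP # ea @ eb @ [RP]) ! Suc p' = X" using Node.prems(2) unfolding p' e .
  have pv: "(LP # ea @ eb @ [RP]) ! p' \<noteq> LP" using Node.prems(4) unfolding p' e by simp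
  show ?case
  proof (cases "p' < length ea")
    case True
    have x: "ea ! p' = X" using pX nthA[OF True, of eb] by simp
    obtain p'' where p'': "p' = Suc p''" using pv by (cases p') auto
    have "ea ! p'' \<noteq> LP" using pv nthA[of p'' ea eb] True p'' by simp
    then have "Suc p' < length ea \<and> ea ! Suc p' = RP"
      using Node.IH(1)[of p'] True x p'' ea_def by simp
    then show ?thesis unfolding e p' using nthA[of "Suc p'" ea eb] by simp
  next
    case False
    define j where "j = p' - length ea"
    have pj: "p' = length ea + j" using False j_def by simp
    have jl: "j < length eb"
    proof (rule ccontr)
      assume "\<not> j < length eb"
      then have "j = length eb" using pl pj by simp
      then show False using pX nthC[of ea eb] pj by simp
    qed
    have x: "eb ! j = X" using pX nthB[OF jl, of ea] pj by simp
    show ?thesis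
    proof (cases j)
      case 0
      have "b = Leaf" using expr_hd[of b] x 0 eb_def by auto
      then have "eb = [X]" using eb_def by simp
      then show ?thesis unfolding e p' pj using 0 nthC[of ea eb] by simp
    next
      case (Suc j')
      have "eb ! j' \<noteq> LP" using pv nthB[of j' eb ea] jl pj Suc by simp
      then have "Suc j < length eb \<and> eb ! Suc j = RP"
        using Node.IH(2)[of j] jl x Suc eb_def by simp
      then show ?thesis unfolding e p' pj using nthB[of "Suc j" eb ea] by simp
    qed
  qed
qed

lemma last_expr: "last (expr t) \<noteq> LP"
  by (cases t) auto

lemma last_form: "\<exists>u r. expr t = u @ [X] @ replicate r RP \<and> cnt X u = internal t
   \<and> (t \<noteq> Leaf \<longrightarrow> u \<noteq> [] \<and> last u \<noteq> LP)"
proof (induction t)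
  case Leaf then show ?case by (intro exI[of _ "[]"] exI[of _ 0]) simp
next
  case (Node a b)
  obtain ub rb where ub: "expr b = ub @ [X] @ replicate rb RP" "cnt X ub = internal b"
      "b \<noteq> Leaf \<longrightarrow> ub \<noteq> [] \<and> last ub \<noteq> LP" using Node.IH(2) by blast
  have l: "last (LP # expr a @ ub) \<noteq> LP"
  proof (cases "ub = []")
    case True then show ?thesis using last_expr[of a] expr_ne[of a] by simp
  next
    case False
    then have "b \<noteq> Leaf" using ub(1) by (cases b) (auto dest: arg_cong[where f=length])
    then show ?thesis using ub(3) False by simp
  qed
  have "expr (Node a b) = (LP # expr a @ ub) @ [X] @ replicate (Suc rb) RP"
    using ub(1) by (simp add: replicate_append_same[symmetric])
  moreover have "cnt X (LP # expr a @ ub) = internal (Node a b)" using ub(2) cnt_expr[of a] by simp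
  ultimately show ?case using l by blast
qed

lemma card_cnt: "m \<le> length e \<Longrightarrow> card {r. r < m \<and> e ! r = c} = cnt c (take m e)"
  unfolding cnt_def length_filter_conv_card
  by (rule arg_cong[where f=card]) auto

definition nc :: "tok list \<Rightarrow> nat \<Rightarrow> int" where
  "nc e i = (let p = xpos e i in if 0 < p \<and> e ! (p - 1) = LP then int i
      else (let q = p + length (takeWhile (\<lambda>y. y = RP) (drop (Suc p) e));
             m = (THE m. matches e m q) in int (card {r. r < m \<and> e ! r = X}) + 1))"

lemma name_coord_nc: "name_coord t i = nc (expr t) i"
  by (simp add: name_coord_def nc_def Let_def)

lemma nc_LP: "0 < xpos e i \<Longrightarrow> e ! (xpos e i - 1) = LP \<Longrightarrow> nc e i = int i"
  by (simp add: nc_def Let_def)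

lemma nc_else: "\<not> (0 < xpos e i \<and> e ! (xpos e i - 1) = LP) \<Longrightarrow>
  matches e m (xpos e i + length (takeWhile (\<lambda>y. y = RP) (drop (Suc (xpos e i)) e))) \<Longrightarrow>
  nc e i = int (card {r. r < m \<and> e ! r = X}) + 1"
  unfolding nc_def Let_def using the_match by auto

lemma nc_ge1: "1 \<le> i \<Longrightarrow> 1 \<le> nc e i"
  by (simp add: nc_def Let_def)


lemma nc_mid: "name_coord (Node a b) (Suc (internal a)) = 1"
proof (cases a)
  case Leaf
  have e: "expr (Node a b) = [LP, X] @ (expr b @ [RP])" using Leaf by simp
  have x: "Xs (expr (Node a b)) ! 0 = 1" unfolding e Xs_append by (simp add: Xs_append[of "[LP]" "[X]", simplified])
  have "nc (expr (Node a b)) (Suc (internal a)) = int (Suc (internal a))"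
    by (rule nc_LP) (use x Leaf in \<open>simp_all add: xpos_Xs\<close>)
  then show ?thesis using Leaf by (simp add: name_coord_nc)
next
  case (Node a1 a2)
  obtain u r where ur: "expr a = u @ [X] @ replicate r RP" "cnt X u = internal a" "u \<noteq> []" "last u \<noteq> LP"
    using last_form[of a] Node by auto
  define rest where "rest = replicate r RP @ expr b @ [RP]"
  have e: "expr (Node a b) = (LP # u) @ [X] @ rest" using ur(1) by (simp add: rest_def)
  have Xe: "Xs (expr (Node a b)) = Xs (LP # u) @ map (\<lambda>p. p + length (LP # u)) (Xs ([X] @ rest))"
    unfolding e by (rule Xs_append)
  have X1: "Xs ([X] @ rest) ! 0 = 0" unfolding Xs_append by simp
  have lx: "length (Xs (LP # u)) = internal a" using ur(2) by (simp add: length_Xs)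
  have p: "xpos (expr (Node a b)) (Suc (internal a)) = Suc (length u)"
  proof -
    have "xpos (expr (Node a b)) (Suc (internal a)) = Xs (expr (Node a b)) ! (length (Xs (LP # u)) + 0)"
      using lx by (simp add: xpos_Xs)
    also have "\<dots> = Suc (length u)" unfolding Xe nth_append_length_plus Xs_append
      by simp
    finally show ?thesis .
  qed
  have prev: "expr (Node a b) ! (Suc (length u) - 1) = last u"
  proof -
    have "expr (Node a b) ! length u = (LP # u) ! length u" unfolding e
      by (rule nth_append_left) simp
    also have "\<dots> = last u" using ur(3) by (cases u rule: rev_cases) (auto simp: nth_append)
    finally show ?thesis by simp
  qed
  have dr: "drop (Suc (Suc (length u))) (expr (Node a b)) = rest" unfolding e by simp
  have tw0: "takeWhile (\<lambda>y. y = RP) (expr b @ [RP]) = []" by (cases b) auto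
  have tw: "takeWhile (\<lambda>y. y = RP) rest = replicate r RP"
    unfolding rest_def by (subst takeWhile_append2) (auto simp: tw0)
  have m: "matches (expr (Node a b)) 1 (Suc (length u) + r)"
  proof -
    have "matches (expr a) 0 (length (expr a) - 1)" using root_match[of a1 a2] Node by simp
    from matches_shift[OF this, of "[LP]" "expr b @ [RP]"]
    show ?thesis using ur(1) by simp
  qed
  have "nc (expr (Node a b)) (Suc (internal a)) = int (card {r. r < 1 \<and> expr (Node a b) ! r = X}) + 1"
    by (rule nc_else) (use p prev ur(4) m dr tw in simp_all)
  also have "{r. r < 1 \<and> expr (Node a b) ! r = X} = {}" by auto
  finally show ?thesis by (simp add: name_coord_nc)
qed

lemma nc_shift:
  assumes ys: "ys = expr t'" and i1: "1 \<le> i" and i2: "i \<le> internal t'" and py0: "0 < xpos ys i"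
  shows "nc (pre @ ys @ post) (i + cnt X pre) = nc ys i + int (cnt X pre)"
proof -
  define e where "e = pre @ ys @ post"
  define P where "P = length pre"
  define c where "c = cnt X pre"
  define py where "py = xpos ys i"
  have lenXs: "length (Xs ys) = Suc (internal t')" using ys Xs_expr_len by simp
  have Xe: "Xs e = Xs pre @ map (\<lambda>p. p + P) (Xs ys @ map (\<lambda>p. p + length ys) (Xs post))"
    unfolding e_def P_def by (simp add: Xs_append)
  have pyXs: "py = Xs ys ! (i - 1)" by (simp add: py_def xpos_Xs)
  have pe: "xpos e (i + c) = py + P"
  proof -
    have "xpos e (i + c) = Xs e ! (length (Xs pre) + (i - 1))"
      using i1 by (simp add: xpos_Xs length_Xs c_def add.commute)
    also have "\<dots> = map (\<lambda>p. p + P) (Xs ys @ map (\<lambda>p. p + length ys) (Xs post)) ! (i - 1)"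
      unfolding Xe by (rule nth_append_length_plus)
    also have "\<dots> = py + P"
    proof -
      have il: "i - 1 < length (Xs ys)" using lenXs i1 i2 by simp
      then have "(Xs ys @ map (\<lambda>p. p + length ys) (Xs post)) ! (i - 1) = Xs ys ! (i - 1)"
        by (simp add: nth_append)
      then show ?thesis using il pyXs by (simp add: nth_append)
    qed
    finally show ?thesis .
  qed
  have pyl: "py < length ys" and pyX: "ys ! py = X"
    using Xs_nth[of "i - 1" ys] lenXs i1 i2 pyXs by auto
  have py0': "0 < py" using py0 py_def by simp
  have prev: "e ! (py + P - 1) = ys ! (py - 1)"
  proof -
    have a: "py + P - 1 = length pre + (py - 1)" using py0' by (simp add: P_def)
    have "py - 1 < length ys" using pyl by simp
    then have "(ys @ post) ! (py - 1) = ys ! (py - 1)" by (rule nth_append_left)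
    then show ?thesis unfolding a e_def by (simp only: append_assoc nth_append_length_plus)
  qed
  show ?thesis
  proof (cases "ys ! (py - 1) = LP")
    case True
    have "nc e (i + c) = int (i + c)" by (rule nc_LP) (use pe prev True py0' in auto)
    moreover have "nc ys i = int i" by (rule nc_LP) (use True py0 in \<open>auto simp: py_def\<close>)
    ultimately show ?thesis by (simp add: e_def c_def)
  next
    case False
    have ra: "Suc py < length ys \<and> ys ! Suc py = RP"
      using rp_after[of py t'] pyl pyX py0' False ys by auto
    define tw where "tw = takeWhile (\<lambda>y. y = RP) (drop (Suc py) ys)"
    have nxt: "Xs ys ! i < length ys \<and> ys ! (Xs ys ! i) = X" using Xs_nth lenXs i2 by simp
    have gt: "py < Xs ys ! i" using Xs_sorted[of "i - 1" i ys] lenXs i1 i2 pyXs by simp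
    have Xin: "X \<in> set (drop (Suc py) ys)"
    proof -
      have "drop (Suc py) ys ! (Xs ys ! i - Suc py) = X" using nxt gt by simp
      moreover have "Xs ys ! i - Suc py < length (drop (Suc py) ys)"
        unfolding length_drop using nxt gt by (intro diff_less_mono) auto
      ultimately show ?thesis by (metis nth_mem)
    qed
    have dr: "drop (Suc (py + P)) e = drop (Suc py) ys @ post"
      unfolding e_def P_def using pyl by simp
    have tw_e: "takeWhile (\<lambda>y. y = RP) (drop (Suc (py + P)) e) = tw"
      unfolding dr tw_def using Xin by (simp add: takeWhile_append1)
    have dCons: "drop (Suc py) ys = RP # drop (Suc (Suc py)) ys"
      using ra Cons_nth_drop_Suc[of "Suc py" ys] by simp
    have tw1: "0 < length tw" unfolding tw_def dCons by simp
    define qy where "qy = py + length tw"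
    have twlen: "length tw \<le> length ys - Suc py"
      unfolding tw_def by (metis length_drop length_takeWhile_le)
    have qyl: "qy < length ys" using twlen tw1 pyl ra unfolding qy_def by linarith
    have qyRP: "ys ! qy = RP"
    proof -
      have "tw ! (length tw - 1) \<in> set tw" using tw1 by simp
      then have "tw ! (length tw - 1) = RP" unfolding tw_def by (metis (mono_tags) set_takeWhileD)
      moreover have "tw ! (length tw - 1) = drop (Suc py) ys ! (length tw - 1)"
        unfolding tw_def by (rule takeWhile_nth) (use tw1 tw_def in simp)
      moreover have "drop (Suc py) ys ! (length tw - 1) = ys ! qy"
      proof -
        have a: "Suc py + (length tw - 1) = qy" using tw1 unfolding qy_def by simp
        have "drop (Suc py) ys ! (length tw - 1) = ys ! (Suc py + (length tw - 1))"
          by (rule nth_drop) (use ra in simp)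
        then show ?thesis unfolding a .
      qed
      ultimately show ?thesis by simp
    qed
    obtain my where my: "matches ys my qy" using match_exists ys qyl qyRP by blast
    have mye: "matches e (my + P) (qy + P)"
      using matches_shift[OF my, of pre post] unfolding e_def P_def .
    have myl: "my < length ys" using my unfolding matches_def by auto
    have nce: "nc e (i + c) = int (card {r. r < my + P \<and> e ! r = X}) + 1"
    proof (rule nc_else)
      show "\<not> (0 < xpos e (i + c) \<and> e ! (xpos e (i + c) - 1) = LP)" using pe prev False by simp
      show "matches e (my + P) (xpos e (i + c) + length (takeWhile (\<lambda>y. y = RP) (drop (Suc (xpos e (i + c))) e)))"
        using mye unfolding pe tw_e qy_def by (simp add: ac_simps)
    qed
    have ncy: "nc ys i = int (card {r. r < my \<and> ys ! r = X}) + 1"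
    proof (rule nc_else)
      show "\<not> (0 < xpos ys i \<and> ys ! (xpos ys i - 1) = LP)" using False py_def by simp
      show "matches ys my (xpos ys i + length (takeWhile (\<lambda>y. y = RP) (drop (Suc (xpos ys i)) ys)))"
        using my unfolding qy_def tw_def py_def .
    qed
    have "card {r. r < my + P \<and> e ! r = X} = cnt X (take (my + P) e)"
      by (rule card_cnt) (use myl in \<open>simp add: e_def P_def\<close>)
    also have "take (my + P) e = pre @ take my ys" unfolding e_def P_def using myl by simp
    also have "card {r. r < my \<and> ys ! r = X} = cnt X (take my ys)"
      by (rule card_cnt) (use myl in simp)
    ultimately show ?thesis using nce ncy unfolding e_def c_def by simp
  qed
qed


lemma xpos_pos: "t \<noteq> Leaf \<Longrightarrow> 1 \<le> i \<Longrightarrow> i \<le> Suc (internal t) \<Longrightarrow> 0 < xpos (expr t) i"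
proof -
  assume a: "t \<noteq> Leaf" "1 \<le> i" "i \<le> Suc (internal t)"
  have "i - 1 < length (Xs (expr t))" using a by (simp add: Xs_expr_len)
  then have "expr t ! xpos (expr t) i = X" using Xs_nth by (simp add: xpos_Xs)
  moreover have "expr t ! 0 = LP" using expr_hd[of t] a by auto
  ultimately show ?thesis by (metis gr0I tok.distinct(3))
qed

lemma upt_split: "[1..<Suc (Suc (ia + ib))] = [1..<Suc ia] @ [Suc ia] @ map (\<lambda>j. j + Suc ia) [1..<Suc ib]"
  by (induction ib) auto

lemma name_Node: "name (Node a b) = name a @ [1] @ map (\<lambda>x. x + int (Suc (internal a))) (name b)"
proof -
  have n: "name (Node a b) = map (name_coord (Node a b)) [1..<Suc (internal a)] @ [name_coord (Node a b) (Suc (internal a))]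
     @ map (\<lambda>j. name_coord (Node a b) (j + Suc (internal a))) [1..<Suc (internal b)]"
    unfolding name_def by (simp only: internal.simps upt_split map_append list.map map_map comp_def)
  have p1: "map (name_coord (Node a b)) [1..<Suc (internal a)] = name a"
    unfolding name_def
  proof (rule map_cong[OF refl])
    fix i assume "i \<in> set [1..<Suc (internal a)]"
    then have i: "1 \<le> i" "i \<le> internal a" by auto
    then have aL: "a \<noteq> Leaf" by auto
    have e: "expr (Node a b) = [LP] @ expr a @ (expr b @ [RP])" by simp
    have "nc ([LP] @ expr a @ (expr b @ [RP])) (i + cnt X [LP]) = nc (expr a) i + int (cnt X [LP])"
      by (rule nc_shift[OF refl i]) (rule xpos_pos[OF aL]; use i in simp)
    then show "name_coord (Node a b) i = name_coord a i" unfolding name_coord_nc e by simp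
  qed
  have p3: "map (\<lambda>j. name_coord (Node a b) (j + Suc (internal a))) [1..<Suc (internal b)]
      = map (\<lambda>x. x + int (Suc (internal a))) (name b)"
    unfolding name_def map_map
  proof (rule map_cong[OF refl])
    fix j assume "j \<in> set [1..<Suc (internal b)]"
    then have j: "1 \<le> j" "j \<le> internal b" by auto
    then have bL: "b \<noteq> Leaf" by auto
    have e: "expr (Node a b) = (LP # expr a) @ expr b @ [RP]" by simp
    have c: "cnt X (LP # expr a) = Suc (internal a)" by (simp add: cnt_expr)
    have "nc ((LP # expr a) @ expr b @ [RP]) (j + cnt X (LP # expr a)) = nc (expr b) j + int (cnt X (LP # expr a))"
      by (rule nc_shift[OF refl j]) (rule xpos_pos[OF bL]; use j in simp)
    then show "name_coord (Node a b) (j + Suc (internal a)) = ((\<lambda>x. x + int (Suc (internal a))) \<circ> name_coord b) j"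
      unfolding name_coord_nc e c by simp
  qed
  show ?thesis unfolding n p1 p3 nc_mid by simp
qed

lemma name_length: "length (name t) = internal t"
  by (simp add: name_def)

lemma name_ge1: "j < length (name t) \<Longrightarrow> 1 \<le> name t ! j"
  by (simp add: name_def name_coord_nc nc_ge1 del: upt_Suc)


theorem mainTheorem5:
  fixes n :: nat and v :: "int list" and k :: nat
  assumes "n \<ge> 1" and "v \<in> Nb n"
    and "k = Suc (GREATEST i. i < n \<and> v ! i = 1)"
  shows "v \<in> Nhat n \<longleftrightarrow>
           take (k - 1) v \<in> Nhat (k - 1) \<and>
           map (\<lambda>x. x - int k) (drop k v) \<in> Nhat (n - k)"
proof -
  have len: "length v = n" and bnd: "\<forall>i<n. 1 \<le> v ! i \<and> v ! i \<le> int (Suc i)"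
    using assms(2) unfolding Nb_def by auto
  have v0: "v ! 0 = 1" using bnd assms(1) by force
  define g where "g = (GREATEST i. i < n \<and> v ! i = 1)"
  have kg: "k = Suc g" using assms(3) g_def by simp
  have gP: "g < n \<and> v ! g = 1" unfolding g_def
    by (rule GreatestI_nat[of _ 0 n]) (use v0 assms(1) in auto)
  have gmax: "i \<le> g" if "i < n" "v ! i = 1" for i
    unfolding g_def by (rule Greatest_le_nat[of _ i n]) (use that in auto)
  show ?thesis
  proof
    assume "v \<in> Nhat n"
    then obtain t where t: "v = name t" "internal t = n" unfolding Nhat_def by auto
    then obtain a b where ab: "t = Node a b" using assms(1) by (cases t) auto
    have v: "v = name a @ [1] @ map (\<lambda>x. x + int (Suc (internal a))) (name b)"
      using t ab name_Node by simp
    have la: "length (name a) = internal a" by (rule name_length)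
    have via: "v ! internal a = 1" using v la by (simp add: nth_append)
    have ian: "internal a < n" using t ab by simp
    have "g = internal a"
    proof (rule ccontr)
      assume "g \<noteq> internal a"
      then have gt: "internal a < g" using gmax[OF ian via] by simp
      define j where "j = g - Suc (internal a)"
      have gj: "g = length (name a @ [1]) + j" using gt la j_def by simp
      have jl: "j < length (name b)" using gP gj t ab la by (simp add: name_length)
      have "v ! g = name b ! j + int (Suc (internal a))" unfolding v gj
        by (simp only: append_assoc[symmetric] nth_append_length_plus) (simp add: jl)
      then have "v ! g \<ge> 2" using name_ge1[OF jl] by simp
      then show False using gP by simp
    qed
    then have kk: "k = Suc (internal a)" using kg by simp
    have "take (k - 1) v = name a" using v la kk by simp
    moreover have "map (\<lambda>x. x - int k) (drop k v) = name b" using v la kk by (simp add: comp_def)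
    moreover have "internal b = n - k" using t ab kk by simp
    ultimately show "take (k - 1) v \<in> Nhat (k - 1) \<and> map (\<lambda>x. x - int k) (drop k v) \<in> Nhat (n - k)"
      unfolding Nhat_def using kk by auto
  next
    assume "take (k - 1) v \<in> Nhat (k - 1) \<and> map (\<lambda>x. x - int k) (drop k v) \<in> Nhat (n - k)"
    then obtain a b where a: "take g v = name a" "internal a = g"
      and b: "map (\<lambda>x. x - int k) (drop k v) = name b" "internal b = n - k"
      unfolding Nhat_def kg by auto
    have "name (Node a b) = take g v @ [1] @ map (\<lambda>x. x + int k) (map (\<lambda>x. x - int k) (drop k v))"
      using name_Node[of a b] a b kg by simp
    also have "\<dots> = take g v @ [v ! g] @ drop (Suc g) v" using gP kg by (simp add: comp_def)
    also have "\<dots> = v" using gP len id_take_nth_drop[of g v] by simp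
    finally have "name (Node a b) = v" .
    moreover have "internal (Node a b) = n" using a b kg gP by simp
    ultimately show "v \<in> Nhat n" unfolding Nhat_def by blast
  qed
qed

end
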